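(* Let $u\in\mathcal{B}^N$, $m\in\mathbb{R}$, $\varepsilon>0$, $(r,\sigma)\in F(N,A,u,m)$ and $(t,\sigma)\in F(N,A,u,m-\varepsilon)$ such that $r_a>t_a$ for each $a\in A$. Suppose there is no $i\in N$ and $a\in A$ with $r_a>b_i>t_a$. Then $\sigma$ is a minimum weight perfect matching in $\mathcal{F}^u_\kappa(t)$.
   Context: Fix a finite set $\{\rho_1,\dots,\rho_k\}\subseteq\mathbb{R}_+$ with $\rho_1=0$. $N=\{1,\dots,n\}$ agents, $A$ a set of $n$ rooms. $\mathcal{B}$ is the set of utility functions $u_i(r_a,a)=v^i_a-r_a-\rho_i\max\{0,r_a-b_i\}$ with $v^i\in\mathbb{R}^A$, $b_i\ge0$, $\rho_i\in\{\rho_1,\dots,\rho_k\}$. An allocation for $(N,A,u,m)$ is $(r,\sigma)$ with $\sigma:N\to A$ a bijection, $r\in\mathbb{R}^A$, $\sum_ar_a=m$; envy-free means $u_i(r_{\sigma(i)},\sigma(i))\ge u_i(r_{\sigma(j)},\sigma(j))$ for all $i,j$; $F(N,A,u,m)$ is the set of envy-free allocations. $\kappa_{ia}(u,t)=1+\rho_i$ if $t_a\ge b_i$ and $1$ otherwise (absolute marginal disutility of an increase of rent of room $a$ at $t$). For $t$ with some envy-free $(t,\sigma)$, $\mathcal{F}(t)$ is the bipartite graph on $N\cup A$ with edge $(i,a)$ iff $u_i(t_{\sigma(i)},\sigma(i))=u_i(t_a,a)$, and $\mathcal{F}^u_\kappa(t)$ has weights $w(i,a)=\log\kappa_{ia}(u,t)$;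 a minimum weight perfect matching is a bijection $\mu:N\to A$ using only edges of $\mathcal{F}(t)$ minimizing $\sum_iw(i,\mu(i))$ among such. *)

theory Defs
  imports "HOL-Analysis.Analysis"
begin

definition util :: "('i \<Rightarrow> 'a \<Rightarrow> real) \<Rightarrow> ('i \<Rightarrow> real) \<Rightarrow> ('i \<Rightarrow> real)
    \<Rightarrow> 'i \<Rightarrow> real \<Rightarrow> 'a \<Rightarrow> real" where
  "util v b rho i x a = v i a - x - rho i * max 0 (x - b i)"

definition in_B :: "real set \<Rightarrow> 'i set \<Rightarrow> ('i \<Rightarrow> real) \<Rightarrow> ('i \<Rightarrow> real) \<Rightarrow> bool" where
  "in_B Rhos N b rho \<longleftrightarrow> (\<forall>i\<in>N. b i \<ge> 0 \<and> rho i \<in> Rhos)"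

definition allocation :: "'i set \<Rightarrow> 'a set \<Rightarrow> real \<Rightarrow> ('a \<Rightarrow> real) \<Rightarrow> ('i \<Rightarrow> 'a) \<Rightarrow> bool" where
  "allocation N A m r \<sigma> \<longleftrightarrow> bij_betw \<sigma> N A \<and> (\<Sum>a\<in>A. r a) = m"

definition envy_free :: "'i set \<Rightarrow> 'a set \<Rightarrow> ('i \<Rightarrow> real \<Rightarrow> 'a \<Rightarrow> real) \<Rightarrow> real
    \<Rightarrow> ('a \<Rightarrow> real) \<Rightarrow> ('i \<Rightarrow> 'a) \<Rightarrow> bool" where
  "envy_free N A u m r \<sigma> \<longleftrightarrow> allocation N A m r \<sigma> \<and>
     (\<forall>i\<in>N. \<forall>j\<in>N. u i (r (\<sigma> i)) (\<sigma> i) \<ge> u i (r (\<sigma> j)) (\<sigma> j))"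

definition kappa :: "('i \<Rightarrow> real) \<Rightarrow> ('i \<Rightarrow> real) \<Rightarrow> ('a \<Rightarrow> real) \<Rightarrow> 'i \<Rightarrow> 'a \<Rightarrow> real" where
  "kappa b rho t i a = (if t a \<ge> b i then 1 + rho i else 1)"

definition indiff_edge :: "('i \<Rightarrow> real \<Rightarrow> 'a \<Rightarrow> real) \<Rightarrow> ('a \<Rightarrow> real) \<Rightarrow> ('i \<Rightarrow> 'a)
    \<Rightarrow> 'i \<Rightarrow> 'a \<Rightarrow> bool" where
  "indiff_edge u t \<sigma> i a \<longleftrightarrow> u i (t (\<sigma> i)) (\<sigma> i) = u i (t a) a"

definition perfect_matching :: "'i set \<Rightarrow> 'a set \<Rightarrow> ('i \<Rightarrow> real \<Rightarrow> 'a \<Rightarrow> real)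
    \<Rightarrow> ('a \<Rightarrow> real) \<Rightarrow> ('i \<Rightarrow> 'a) \<Rightarrow> ('i \<Rightarrow> 'a) \<Rightarrow> bool" where
  "perfect_matching N A u t \<sigma> \<mu> \<longleftrightarrow> bij_betw \<mu> N A \<and> (\<forall>i\<in>N. indiff_edge u t \<sigma> i (\<mu> i))"

definition min_weight_pm :: "'i set \<Rightarrow> 'a set \<Rightarrow> ('i \<Rightarrow> 'a \<Rightarrow> real) \<Rightarrow> ('i \<Rightarrow> real)
    \<Rightarrow> ('i \<Rightarrow> real) \<Rightarrow> ('a \<Rightarrow> real) \<Rightarrow> ('i \<Rightarrow> 'a) \<Rightarrow> ('i \<Rightarrow> 'a) \<Rightarrow> bool" where
  "min_weight_pm N A v b rho t \<sigma> \<mu> \<longleftrightarrow>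
     perfect_matching N A (util v b rho) t \<sigma> \<mu> \<and>
     (\<forall>\<nu>. perfect_matching N A (util v b rho) t \<sigma> \<nu> \<longrightarrow>
        (\<Sum>i\<in>N. ln (kappa b rho t i (\<mu> i))) \<le> (\<Sum>i\<in>N. ln (kappa b rho t i (\<nu> i))))"

end

theory Submission
  imports Defs
begin

theorem lemma7:
  fixes N :: "'i set" and A :: "'a set" and Rhos :: "real set"
    and v :: "'i \<Rightarrow> 'a \<Rightarrow> real" and b rho :: "'i \<Rightarrow> real"
    and m \<epsilon> :: real and r t :: "'a \<Rightarrow> real" and \<sigma> :: "'i \<Rightarrow> 'a"
  assumes "finite Rhos" and "0 \<in> Rhos" and "\<forall>x\<in>Rhos. x \<ge> 0"
    and "finite N" and "finite A" and "card A = card N"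
    and "in_B Rhos N b rho"
    and "\<epsilon> > 0"
    and "envy_free N A (util v b rho) m r \<sigma>"
    and "envy_free N A (util v b rho) (m - \<epsilon>) t \<sigma>"
    and "\<forall>a\<in>A. r a > t a"
    and "\<not> (\<exists>i\<in>N. \<exists>a\<in>A. r a > b i \<and> b i > t a)"
  shows "min_weight_pm N A v b rho t \<sigma> \<sigma>"
proof -
  define d where "d a = r a - t a" for a
  have bs: "bij_betw \<sigma> N A" using assms(9) unfolding envy_free_def allocation_def by blast
  have rho0: "rho i \<ge> 0" if "i \<in> N" for i using assms(3,7) that unfolding in_B_def by blast
  have kpos: "kappa b rho t i a > 0" if "i \<in> N" for i a
    using rho0[OF that] unfolding kappa_def by auto
  have dpos: "d a > 0" if "a \<in> A" for a using assms(11) that unfolding d_def by auto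
  have key: "util v b rho i (r a) a = util v b rho i (t a) a - kappa b rho t i a * d a"
    if "i \<in> N" "a \<in> A" for i a
  proof (cases "t a \<ge> b i")
    case True
    then show ?thesis using assms(11) that unfolding util_def kappa_def d_def
      by (auto simp: max_def algebra_simps)
  next
    case False
    then have "r a \<le> b i" using assms(12) that by force
    then show ?thesis using False unfolding util_def kappa_def d_def
      by (auto simp: max_def algebra_simps)
  qed
  have pm: "perfect_matching N A (util v b rho) t \<sigma> \<sigma>"
    using bs unfolding perfect_matching_def indiff_edge_def by auto
  have "(\<Sum>i\<in>N. ln (kappa b rho t i (\<sigma> i))) \<le> (\<Sum>i\<in>N. ln (kappa b rho t i (\<nu> i)))"
    if nu: "perfect_matching N A (util v b rho) t \<sigma> \<nu>" for \<nu>
  proof -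
    have bn: "bij_betw \<nu> N A" and e: "\<And>i. i \<in> N \<Longrightarrow> indiff_edge (util v b rho) t \<sigma> i (\<nu> i)"
      using nu unfolding perfect_matching_def by auto
    have le: "ln (kappa b rho t i (\<sigma> i)) + ln (d (\<sigma> i)) \<le> ln (kappa b rho t i (\<nu> i)) + ln (d (\<nu> i))"
      if i: "i \<in> N" for i
    proof -
      have sa: "\<sigma> i \<in> A" and na: "\<nu> i \<in> A" using bs bn i by (auto simp: bij_betw_def)
      have jN: "inv_into N \<sigma> (\<nu> i) \<in> N" using bs na
        by (metis bij_betw_def inv_into_into)
      have "util v b rho i (r (\<sigma> i)) (\<sigma> i) \<ge> util v b rho i (r (\<sigma> (inv_into N \<sigma> (\<nu> i)))) (\<sigma> (inv_into N \<sigma> (\<nu> i)))"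
        using assms(9) i jN unfolding envy_free_def by blast
      moreover have "\<sigma> (inv_into N \<sigma> (\<nu> i)) = \<nu> i" using bs na
        by (meson bij_betw_inv_into_right)
      ultimately have "util v b rho i (r (\<sigma> i)) (\<sigma> i) \<ge> util v b rho i (r (\<nu> i)) (\<nu> i)" by simp
      moreover have "util v b rho i (t (\<sigma> i)) (\<sigma> i) = util v b rho i (t (\<nu> i)) (\<nu> i)"
        using e[OF i] unfolding indiff_edge_def .
      ultimately have "kappa b rho t i (\<sigma> i) * d (\<sigma> i) \<le> kappa b rho t i (\<nu> i) * d (\<nu> i)"
        using key[OF i sa] key[OF i na] by linarith
      then have "ln (kappa b rho t i (\<sigma> i) * d (\<sigma> i)) \<le> ln (kappa b rho t i (\<nu> i) * d (\<nu> i))"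
        using kpos[OF i] dpos[OF sa] dpos[OF na] by (simp)
      then show ?thesis using kpos[of i "\<sigma> i", OF i] kpos[of i "\<nu> i", OF i] dpos[OF sa] dpos[OF na] by (simp add: ln_mult)
    qed
    have "(\<Sum>i\<in>N. ln (kappa b rho t i (\<sigma> i))) + (\<Sum>i\<in>N. ln (d (\<sigma> i)))
        \<le> (\<Sum>i\<in>N. ln (kappa b rho t i (\<nu> i))) + (\<Sum>i\<in>N. ln (d (\<nu> i)))"
      using sum_mono[of N, OF le] by (simp add: sum.distrib)
    moreover have "(\<Sum>i\<in>N. ln (d (\<sigma> i))) = (\<Sum>a\<in>A. ln (d a))"
      using sum.reindex_bij_betw[OF bs, of "\<lambda>a. ln (d a)"] by simp
    moreover have "(\<Sum>i\<in>N. ln (d (\<nu> i))) = (\<Sum>a\<in>A. ln (d a))"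
      using sum.reindex_bij_betw[OF bn, of "\<lambda>a. ln (d a)"] by simp
    ultimately show ?thesis by simp
  qed
  then show ?thesis using pm unfolding min_weight_pm_def by blast
qed

end
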